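(* In the situation below, the image $\bar\chi\in B$ of $\chi$ under $A\to B$ equals $(\mathbf a_{B^*})^{-1}$, the inverse of the distinguished group-like element of $B^*$.
   Context: $\Bbbk$ a field of characteristic $\ne 2$, $\mathbb G$ an algebraic supergroup, $\mathbb N$ a finite normal super-subgroup, $A=\mathcal O(\mathbb G)$, $B=\mathcal O(\mathbb N)$ with quotient map $a\mapsto\bar a$. Normality gives a left $A$-coaction on $B$, $\bar a\mapsto\sum(-1)^{|a_{(2)}||a_{(3)}|}a_{(1)}S_A(a_{(3)})\otimes\bar a_{(2)}$, hence a dual right $A$-supercomodule structure on $B^*$. Fix a nonzero homogeneous left integral $\phi$ in $B^*$ ($h\phi=\varepsilon(h)\phi$ for all $h\in B^*$; unique up to scalar). There is a unique group-like $\chi\in A$ with $\phi\mapsto\phi\otimes\chi$ under the coaction. The distinguished group-like element $\mathbf a_{B^*}\in B\cong B^{**}$ is the unique group-like element with $\phi*f=\langle f,\mathbf a_{B^*}\rangle\phi$ for all $f\in B^*$. *)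

theory Defs
  imports Complex_Main
begin

text \<open>The underlying k-vector space structure is given by the scalar multiplication sm,
  the Z/2-grading by the even and odd subspaces ev, od.
  The coproduct of x is given (Sweedler-style) by a finite list of pairs of
  homogeneous elements representing an element of A tensor A; elements of tensor
  products are compared via all k-multilinear forms (which separate points of
  a tensor product of vector spaces over a field).\<close>

record ('k, 'a) hsalg =
  sm  :: "'k \<Rightarrow> 'a \<Rightarrow> 'a"
  ev  :: "'a set"
  od  :: "'a set"
  mul :: "'a \<Rightarrow> 'a \<Rightarrow> 'a"
  one :: 'a
  cop :: "'a \<Rightarrow> ('a \<times> 'a) list"
  cou :: "'a \<Rightarrow> 'k"
  ant :: "'a \<Rightarrow> 'a"

definition homp :: "('k, 'a) hsalg \<Rightarrow> bool \<Rightarrow> 'a \<Rightarrow> bool" where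
  "homp H p x \<longleftrightarrow> x \<in> (if p then od H else ev H)"

definition homog :: "('k, 'a) hsalg \<Rightarrow> 'a \<Rightarrow> bool" where
  "homog H x \<longleftrightarrow> x \<in> ev H \<or> x \<in> od H"

text \<open>parity of a homogeneous element (True = odd); the value on 0 is irrelevant\<close>
definition par :: "('k, 'a) hsalg \<Rightarrow> 'a \<Rightarrow> bool" where
  "par H x \<longleftrightarrow> x \<in> od H"

definition ksgn :: "bool \<Rightarrow> bool \<Rightarrow> 'k::field" where
  "ksgn p q = (if p \<and> q then -1 else 1)"

definition bilin :: "('k::field \<Rightarrow> 'a::ab_group_add \<Rightarrow> 'a) \<Rightarrow> ('k \<Rightarrow> 'b::ab_group_add \<Rightarrow> 'b) \<Rightarrow> ('a \<Rightarrow> 'b \<Rightarrow> 'k) \<Rightarrow> bool" where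
  "bilin s1 s2 \<phi> \<longleftrightarrow> (\<forall>y. Vector_Spaces.linear s1 (*) (\<lambda>x. \<phi> x y)) \<and> (\<forall>x. Vector_Spaces.linear s2 (*) (\<phi> x))"

definition trilin :: "('k::field \<Rightarrow> 'a::ab_group_add \<Rightarrow> 'a) \<Rightarrow> ('a \<Rightarrow> 'a \<Rightarrow> 'a \<Rightarrow> 'k) \<Rightarrow> bool" where
  "trilin s \<phi> \<longleftrightarrow> (\<forall>y z. Vector_Spaces.linear s (*) (\<lambda>x. \<phi> x y z)) \<and>
     (\<forall>x z. Vector_Spaces.linear s (*) (\<lambda>y. \<phi> x y z)) \<and> (\<forall>x y. Vector_Spaces.linear s (*) (\<phi> x y))"

text \<open>equality of two elements of V tensor W given as lists of pairs\<close>
definition teq2 :: "('k::field \<Rightarrow> 'a::ab_group_add \<Rightarrow> 'a) \<Rightarrow> ('k \<Rightarrow> 'b::ab_group_add \<Rightarrow> 'b) \<Rightarrow> ('a \<times> 'b) list \<Rightarrow> ('a \<times> 'b) list \<Rightarrow> bool" where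
  "teq2 s1 s2 xs ys \<longleftrightarrow> (\<forall>\<phi>. bilin s1 s2 \<phi> \<longrightarrow>
     (\<Sum>(x, y)\<leftarrow>xs. \<phi> x y) = (\<Sum>(x, y)\<leftarrow>ys. \<phi> x y))"

definition teq3 :: "('k::field \<Rightarrow> 'a::ab_group_add \<Rightarrow> 'a) \<Rightarrow> ('a \<times> 'a \<times> 'a) list \<Rightarrow> ('a \<times> 'a \<times> 'a) list \<Rightarrow> bool" where
  "teq3 s xs ys \<longleftrightarrow> (\<forall>\<phi>. trilin s \<phi> \<longrightarrow>
     (\<Sum>(x, y, z)\<leftarrow>xs. \<phi> x y z) = (\<Sum>(x, y, z)\<leftarrow>ys. \<phi> x y z))"

definition cop2l :: "('k, 'a) hsalg \<Rightarrow> 'a \<Rightarrow> ('a \<times> 'a \<times> 'a) list" where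
  "cop2l H x = concat (map (\<lambda>(y, z). map (\<lambda>(y1, y2). (y1, y2, z)) (cop H y)) (cop H x))"

definition cop2r :: "('k, 'a) hsalg \<Rightarrow> 'a \<Rightarrow> ('a \<times> 'a \<times> 'a) list" where
  "cop2r H x = concat (map (\<lambda>(y, z). map (\<lambda>(z1, z2). (y, z1, z2)) (cop H z)) (cop H x))"

definition super_vs :: "('k::field, 'a::ab_group_add) hsalg \<Rightarrow> bool" where
  "super_vs H \<longleftrightarrow> vector_space (sm H) \<and> module.subspace (sm H) (ev H) \<and> module.subspace (sm H) (od H)
     \<and> ev H \<inter> od H = {0} \<and> (\<forall>x. \<exists>u\<in>ev H. \<exists>v\<in>od H. x = u + v)"

definition comm_hopf_superalg :: "('k::field, 'a::ab_group_add) hsalg \<Rightarrow> bool" where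
  "comm_hopf_superalg H \<longleftrightarrow>
    super_vs H \<and>
    \<comment> \<open>associative unital superalgebra\<close>
    (\<forall>y. Vector_Spaces.linear (sm H) (sm H) (\<lambda>x. mul H x y)) \<and>
    (\<forall>x. Vector_Spaces.linear (sm H) (sm H) (mul H x)) \<and>
    (\<forall>x y z. mul H (mul H x y) z = mul H x (mul H y z)) \<and>
    (\<forall>x. mul H (one H) x = x \<and> mul H x (one H) = x) \<and>
    one H \<in> ev H \<and>
    (\<forall>p q x y. homp H p x \<longrightarrow> homp H q y \<longrightarrow> homp H (p \<noteq> q) (mul H x y)) \<and>
    \<comment> \<open>supercommutativity\<close>
    (\<forall>x y. homog H x \<longrightarrow> homog H y \<longrightarrow>
        mul H x y = sm H (ksgn (par H x) (par H y)) (mul H y x)) \<and>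
    \<comment> \<open>coproduct: even linear map given by homogeneous Sweedler lists\<close>
    (\<forall>x. \<forall>(y, z)\<in>set (cop H x). homog H y \<and> homog H z) \<and>
    (\<forall>p x. homp H p x \<longrightarrow> (\<forall>(y, z)\<in>set (cop H x). \<exists>q r. homp H q y \<and> homp H r z \<and> (q \<noteq> r) = p)) \<and>
    (\<forall>x y. teq2 (sm H) (sm H) (cop H (x + y)) (cop H x @ cop H y)) \<and>
    (\<forall>c x. teq2 (sm H) (sm H) (cop H (sm H c x)) (map (\<lambda>(y, z). (sm H c y, z)) (cop H x))) \<and>
    \<comment> \<open>coassociativity\<close>
    (\<forall>x. teq3 (sm H) (cop2l H x) (cop2r H x)) \<and>
    \<comment> \<open>counit: even linear map\<close>
    Vector_Spaces.linear (sm H) (*) (cou H) \<and>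
    (\<forall>x\<in>od H. cou H x = 0) \<and>
    (\<forall>x. (\<Sum>(y, z)\<leftarrow>cop H x. sm H (cou H y) z) = x) \<and>
    (\<forall>x. (\<Sum>(y, z)\<leftarrow>cop H x. sm H (cou H z) y) = x) \<and>
    \<comment> \<open>coproduct and counit are superalgebra maps\<close>
    (\<forall>x y. teq2 (sm H) (sm H) (cop H (mul H x y))
       (concat (map (\<lambda>(x1, x2). map (\<lambda>(y1, y2).
           (sm H (ksgn (par H x2) (par H y1)) (mul H x1 y1), mul H x2 y2)) (cop H y)) (cop H x)))) \<and>
    teq2 (sm H) (sm H) (cop H (one H)) [(one H, one H)] \<and>
    (\<forall>x y. cou H (mul H x y) = cou H x * cou H y) \<and> cou H (one H) = 1 \<and>
    \<comment> \<open>antipode\<close>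
    Vector_Spaces.linear (sm H) (sm H) (ant H) \<and>
    (\<forall>x. (\<Sum>(y, z)\<leftarrow>cop H x. mul H (ant H y) z) = sm H (cou H x) (one H)) \<and>
    (\<forall>x. (\<Sum>(y, z)\<leftarrow>cop H x. mul H y (ant H z)) = sm H (cou H x) (one H))"

inductive_set gen_alg :: "('k, 'a::ab_group_add) hsalg \<Rightarrow> 'a set \<Rightarrow> 'a set" for H G where
  gen: "x \<in> G \<Longrightarrow> x \<in> gen_alg H G"
| one: "one H \<in> gen_alg H G"
| add: "x \<in> gen_alg H G \<Longrightarrow> y \<in> gen_alg H G \<Longrightarrow> x + y \<in> gen_alg H G"
| smul: "x \<in> gen_alg H G \<Longrightarrow> sm H c x \<in> gen_alg H G"
| mul: "x \<in> gen_alg H G \<Longrightarrow> y \<in> gen_alg H G \<Longrightarrow> mul H x y \<in> gen_alg H G"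

text \<open>O(G) of an algebraic supergroup: finitely generated supercommutative Hopf superalgebra\<close>
definition algebraic_supergroup_alg :: "('k::field, 'a::ab_group_add) hsalg \<Rightarrow> bool" where
  "algebraic_supergroup_alg H \<longleftrightarrow> comm_hopf_superalg H \<and> (\<exists>G. finite G \<and> gen_alg H G = UNIV)"

definition fin_dim :: "('k::field, 'a::ab_group_add) hsalg \<Rightarrow> bool" where
  "fin_dim H \<longleftrightarrow> (\<exists>S. finite S \<and> module.span (sm H) S = UNIV)"

definition hopf_superalg_hom :: "('k::field, 'a::ab_group_add) hsalg \<Rightarrow> ('k, 'b::ab_group_add) hsalg \<Rightarrow> ('a \<Rightarrow> 'b) \<Rightarrow> bool" where
  "hopf_superalg_hom A B \<pi> \<longleftrightarrow>
    Vector_Spaces.linear (sm A) (sm B) \<pi> \<and>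
    (\<forall>p x. homp A p x \<longrightarrow> homp B p (\<pi> x)) \<and>
    (\<forall>x y. \<pi> (mul A x y) = mul B (\<pi> x) (\<pi> y)) \<and> \<pi> (one A) = one B \<and>
    (\<forall>x. teq2 (sm B) (sm B) (cop B (\<pi> x)) (map (\<lambda>(y, z). (\<pi> y, \<pi> z)) (cop A x))) \<and>
    (\<forall>x. cou B (\<pi> x) = cou A x) \<and>
    (\<forall>x. ant B (\<pi> x) = \<pi> (ant A x))"

definition adj_expr :: "('k::field, 'a::ab_group_add) hsalg \<Rightarrow> ('a \<Rightarrow> 'b) \<Rightarrow> 'a \<Rightarrow> ('a \<times> 'b) list" where
  "adj_expr A \<pi> x = map (\<lambda>(x1, x2, x3). (sm A (ksgn (par A x2) (par A x3)) (mul A x1 (ant A x3)), \<pi> x2))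
      (cop2r A x)"

text \<open>normality of the Hopf superideal ker pi (i.e. of the super-subgroup N):
  the adjoint coaction descends to B = A / ker pi\<close>
definition normal_quotient :: "('k::field, 'a::ab_group_add) hsalg \<Rightarrow> ('k, 'b::ab_group_add) hsalg \<Rightarrow> ('a \<Rightarrow> 'b) \<Rightarrow> bool" where
  "normal_quotient A B \<pi> \<longleftrightarrow> (\<forall>x. \<pi> x = 0 \<longrightarrow> teq2 (sm A) (sm B) (adj_expr A \<pi> x) [])"

definition coactB :: "('k::field, 'a::ab_group_add) hsalg \<Rightarrow> ('a \<Rightarrow> 'b) \<Rightarrow> 'b \<Rightarrow> ('a \<times> 'b) list" where
  "coactB A \<pi> b = adj_expr A \<pi> (SOME x. \<pi> x = b)"

text \<open>multiplication of B* (dual of the coproduct of B, with Koszul sign)\<close>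
definition conv :: "('k::field, 'b::ab_group_add) hsalg \<Rightarrow> ('b \<Rightarrow> 'k) \<Rightarrow> ('b \<Rightarrow> 'k) \<Rightarrow> 'b \<Rightarrow> 'k" where
  "conv B f g b = (\<Sum>(x, y)\<leftarrow>cop B b. ksgn (par B x) (par B y) * f x * g y)"

definition dual_space :: "('k::field, 'b::ab_group_add) hsalg \<Rightarrow> ('b \<Rightarrow> 'k) set" where
  "dual_space B = {f. Vector_Spaces.linear (sm B) (*) f}"

definition homog_functional :: "('k::field, 'b::ab_group_add) hsalg \<Rightarrow> ('b \<Rightarrow> 'k) \<Rightarrow> bool" where
  "homog_functional B f \<longleftrightarrow> (\<forall>x\<in>od B. f x = 0) \<or> (\<forall>x\<in>ev B. f x = 0)"

text \<open>left integral in B*: h phi = eps_{B*}(h) phi, where eps_{B*}(h) = h(1_B)\<close>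
definition left_integral :: "('k::field, 'b::ab_group_add) hsalg \<Rightarrow> ('b \<Rightarrow> 'k) \<Rightarrow> bool" where
  "left_integral B \<phi> \<longleftrightarrow> \<phi> \<in> dual_space B \<and>
     (\<forall>h\<in>dual_space B. conv B h \<phi> = (\<lambda>b. h (one B) * \<phi> b))"

definition group_like :: "('k::field, 'a::ab_group_add) hsalg \<Rightarrow> 'a \<Rightarrow> bool" where
  "group_like H g \<longleftrightarrow> teq2 (sm H) (sm H) (cop H g) [(g, g)] \<and> cou H g = 1"

text \<open>phi maps to phi (tensor) chi under the right A-coaction on B* dual to coactB:
  the dual coaction rho satisfies  sum <f_0, b> f_1 = sum (-1)^(|b_-1||b_0|) <f, b_0> b_-1\<close>
definition coacts_by :: "('k::field, 'a::ab_group_add) hsalg \<Rightarrow> ('a \<Rightarrow> 'b::ab_group_add) \<Rightarrow> ('k, 'b) hsalg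
     \<Rightarrow> ('b \<Rightarrow> 'k) \<Rightarrow> 'a \<Rightarrow> bool" where
  "coacts_by A \<pi> B \<phi> \<chi> \<longleftrightarrow> (\<forall>b. (\<Sum>(c, b0)\<leftarrow>coactB A \<pi> b.
       sm A (ksgn (par A c) (par B b0) * \<phi> b0) c) = sm A (\<phi> b) \<chi>)"

definition distinguished_gl :: "('k::field, 'b::ab_group_add) hsalg \<Rightarrow> ('b \<Rightarrow> 'k) \<Rightarrow> 'b \<Rightarrow> bool" where
  "distinguished_gl B \<phi> a \<longleftrightarrow> group_like B a \<and>
     (\<forall>f\<in>dual_space B. conv B \<phi> f = (\<lambda>b. f a * \<phi> b))"

end

theory Submission
  imports Defs
begin

lemma lin_add: "Vector_Spaces.linear s1 s2 f \<Longrightarrow> f (x + y) = f x + f y"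
  by (simp add: linear_iff_module_hom module_hom.add)
lemma lin_scale: "Vector_Spaces.linear s1 s2 f \<Longrightarrow> f (s1 c x) = s2 c (f x)"
  by (simp add: linear_iff_module_hom module_hom.scale)
lemma lin_vs1: "Vector_Spaces.linear s1 s2 f \<Longrightarrow> vector_space s1"
  by (simp add: Vector_Spaces.linear_def)
lemma lin_vs2: "Vector_Spaces.linear s1 s2 f \<Longrightarrow> vector_space s2"
  by (simp add: Vector_Spaces.linear_def)
lemma lin_0: "Vector_Spaces.linear s1 s2 f \<Longrightarrow> f 0 = 0"
  using lin_add[of s1 s2 f 0 0] by simp
lemma lin_neg: "Vector_Spaces.linear s1 s2 f \<Longrightarrow> f (- x) = - f x"
  using lin_add[of s1 s2 f x "-x"] lin_0[of s1 s2 f] by (metis add.commute add_eq_0_iff2 minus_add_cancel)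
lemma lin_diff: "Vector_Spaces.linear s1 s2 f \<Longrightarrow> f (x - y) = f x - f y"
  using lin_add[of s1 s2 f x "-y"] lin_neg[of s1 s2 f y] by simp
lemma lin_sum_list: "Vector_Spaces.linear s1 s2 f \<Longrightarrow> f (\<Sum>x\<leftarrow>xs. g x) = (\<Sum>x\<leftarrow>xs. f (g x))"
  by (induction xs) (auto simp: lin_add lin_0)
lemma lin_comp: "Vector_Spaces.linear s1 s2 f \<Longrightarrow> Vector_Spaces.linear s2 s3 g \<Longrightarrow> Vector_Spaces.linear s1 s3 (\<lambda>x. g (f x))"
  using Vector_Spaces.linear_compose[of s1 s2 f s3 g] by (simp add: o_def)

lemma vs_field: "vector_space ((*) :: 'k::field \<Rightarrow> 'k \<Rightarrow> 'k)"
  by unfold_locales (auto simp: algebra_simps)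

lemma linI: "vector_space s1 \<Longrightarrow> vector_space s2 \<Longrightarrow> (\<And>x y. f (x + y) = f x + f y) \<Longrightarrow> (\<And>c x. f (s1 c x) = s2 c (f x))
   \<Longrightarrow> Vector_Spaces.linear s1 s2 f"
  unfolding linear_iff_module_hom module_hom_def module_hom_axioms_def module_iff_vector_space by auto

lemma sep_nonzero:
  assumes vs: "vector_space s" and v: "v \<noteq> 0"
  shows "\<exists>l. Vector_Spaces.linear s ((*) :: 'k::field \<Rightarrow> 'k \<Rightarrow> 'k) l \<and> l v = 1"
proof -
  interpret vp: vector_space_pair s "(*) :: 'k \<Rightarrow> 'k \<Rightarrow> 'k"
    using vs vs_field by (simp add: vector_space_pair_def)
  have "vp.vs1.independent {v}" using v by simp
  from vp.linear_independent_extend[OF this, of "\<lambda>_. 1"] show ?thesis by auto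
qed

lemma sep:
  assumes vs: "vector_space s"
    and h: "\<And>l. Vector_Spaces.linear s ((*) :: 'k::field \<Rightarrow> 'k \<Rightarrow> 'k) l \<Longrightarrow> l v = l w"
  shows "v = w"
proof (rule ccontr)
  assume "v \<noteq> w"
  then have "v - w \<noteq> 0" by simp
  from sep_nonzero[OF vs this] obtain l where l: "Vector_Spaces.linear s ((*) :: 'k \<Rightarrow> 'k \<Rightarrow> 'k) l" "l (v - w) = 1" by blast
  with h[OF l(1)] show False by (simp add: lin_diff)
qed

lemma lin_sum_list2: "Vector_Spaces.linear s1 s2 f \<Longrightarrow> f (\<Sum>(x, y)\<leftarrow>xs. g x y) = (\<Sum>(x, y)\<leftarrow>xs. f (g x y))"
  by (induction xs) (auto simp: lin_add lin_0)
lemma lin_sum_list3: "Vector_Spaces.linear s1 s2 f \<Longrightarrow> f (\<Sum>(x, y, z)\<leftarrow>xs. g x y z) = (\<Sum>(x, y, z)\<leftarrow>xs. f (g x y z))"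
  by (induction xs) (auto simp: lin_add lin_0)

lemma teq2_transfer:
  assumes "teq2 s1 s2 xs ys" "vector_space s3"
    "\<And>y. Vector_Spaces.linear s1 s3 (\<lambda>x. F x y)" "\<And>x. Vector_Spaces.linear s2 s3 (F x)"
  shows "(\<Sum>(x, y)\<leftarrow>xs. F x y) = (\<Sum>(x, y)\<leftarrow>ys. F x y)"
proof (rule sep[OF assms(2)])
  fix l :: "_ \<Rightarrow> 'a" assume l: "Vector_Spaces.linear s3 (*) l"
  have "bilin s1 s2 (\<lambda>x y. l (F x y))"
    unfolding bilin_def using lin_comp[OF assms(3) l] lin_comp[OF assms(4) l] by blast
  with assms(1) have "(\<Sum>(x, y)\<leftarrow>xs. l (F x y)) = (\<Sum>(x, y)\<leftarrow>ys. l (F x y))"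
    unfolding teq2_def by blast
  then show "l (\<Sum>(x, y)\<leftarrow>xs. F x y) = l (\<Sum>(x, y)\<leftarrow>ys. F x y)"
    by (simp add: lin_sum_list2[OF l])
qed

lemma teq3_transfer:
  assumes "teq3 s xs ys" "vector_space s3"
    "\<And>y z. Vector_Spaces.linear s s3 (\<lambda>x. F x y z)" "\<And>x z. Vector_Spaces.linear s s3 (\<lambda>y. F x y z)"
    "\<And>x y. Vector_Spaces.linear s s3 (F x y)"
  shows "(\<Sum>(x, y, z)\<leftarrow>xs. F x y z) = (\<Sum>(x, y, z)\<leftarrow>ys. F x y z)"
proof (rule sep[OF assms(2)])
  fix l :: "_ \<Rightarrow> 'a" assume l: "Vector_Spaces.linear s3 (*) l"
  have "trilin s (\<lambda>x y z. l (F x y z))"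
    unfolding trilin_def using lin_comp[OF assms(3) l] lin_comp[OF assms(4) l] lin_comp[OF assms(5) l] by blast
  with assms(1) have "(\<Sum>(x, y, z)\<leftarrow>xs. l (F x y z)) = (\<Sum>(x, y, z)\<leftarrow>ys. l (F x y z))"
    unfolding teq3_def by blast
  then show "l (\<Sum>(x, y, z)\<leftarrow>xs. F x y z) = l (\<Sum>(x, y, z)\<leftarrow>ys. F x y z)"
    by (simp add: lin_sum_list3[OF l])
qed



definition pev :: "('k, 'a::ab_group_add) hsalg \<Rightarrow> 'a \<Rightarrow> 'a" where
  "pev H x = (THE u. u \<in> ev H \<and> x - u \<in> od H)"

definition pinv :: "('k, 'a::ab_group_add) hsalg \<Rightarrow> 'a \<Rightarrow> 'a" where
  "pinv H x = pev H x - (x - pev H x)"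

locale chs =
  fixes H :: "('k::field, 'a::ab_group_add) hsalg"
  assumes hopf: "comm_hopf_superalg H"
begin

lemma vs: "vector_space (sm H)" using hopf by (simp add: comm_hopf_superalg_def super_vs_def)

sublocale V: vector_space "sm H" by (rule vs)

lemma sub_ev: "V.subspace (ev H)" using hopf by (simp add: comm_hopf_superalg_def super_vs_def)
lemma sub_od: "V.subspace (od H)" using hopf by (simp add: comm_hopf_superalg_def super_vs_def)
lemma ev_od: "x \<in> ev H \<Longrightarrow> x \<in> od H \<Longrightarrow> x = 0"
  using hopf by (auto simp: comm_hopf_superalg_def super_vs_def)
lemma decomp: "\<exists>u\<in>ev H. \<exists>v\<in>od H. x = u + v"
  using hopf by (simp add: comm_hopf_superalg_def super_vs_def)

lemma ev0[simp]: "0 \<in> ev H" by (rule V.subspace_0[OF sub_ev])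
lemma od0[simp]: "0 \<in> od H" by (rule V.subspace_0[OF sub_od])
lemma ev_add: "x \<in> ev H \<Longrightarrow> y \<in> ev H \<Longrightarrow> x + y \<in> ev H" by (rule V.subspace_add[OF sub_ev])
lemma od_add: "x \<in> od H \<Longrightarrow> y \<in> od H \<Longrightarrow> x + y \<in> od H" by (rule V.subspace_add[OF sub_od])
lemma ev_diff: "x \<in> ev H \<Longrightarrow> y \<in> ev H \<Longrightarrow> x - y \<in> ev H" by (rule V.subspace_diff[OF sub_ev])
lemma od_diff: "x \<in> od H \<Longrightarrow> y \<in> od H \<Longrightarrow> x - y \<in> od H" by (rule V.subspace_diff[OF sub_od])
lemma ev_neg: "x \<in> ev H \<Longrightarrow> - x \<in> ev H" by (rule V.subspace_neg[OF sub_ev])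
lemma od_neg: "x \<in> od H \<Longrightarrow> - x \<in> od H" by (rule V.subspace_neg[OF sub_od])
lemma ev_scale: "x \<in> ev H \<Longrightarrow> sm H c x \<in> ev H" by (rule V.subspace_scale[OF sub_ev])
lemma od_scale: "x \<in> od H \<Longrightarrow> sm H c x \<in> od H" by (rule V.subspace_scale[OF sub_od])
lemma ev_sum: "(\<And>x. x \<in> set xs \<Longrightarrow> f x \<in> ev H) \<Longrightarrow> (\<Sum>x\<leftarrow>xs. f x) \<in> ev H"
  by (induction xs) (auto intro: ev_add)

lemma pev: "pev H x \<in> ev H \<and> x - pev H x \<in> od H"
proof -
  obtain u v where uv: "u \<in> ev H" "v \<in> od H" "x = u + v" using decomp by blast
  have ex: "\<exists>u. u \<in> ev H \<and> x - u \<in> od H" using uv by (intro exI[of _ u]) simp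
  have un: "u1 = u2" if "u1 \<in> ev H \<and> x - u1 \<in> od H" "u2 \<in> ev H \<and> x - u2 \<in> od H" for u1 u2
  proof -
    have "u1 - u2 \<in> ev H" using that ev_diff by blast
    moreover have "u1 - u2 = (x - u2) - (x - u1)" by simp
    then have "u1 - u2 \<in> od H" using that od_diff by metis
    ultimately show ?thesis using ev_od by fastforce
  qed
  show ?thesis unfolding pev_def using theI[of "\<lambda>u. u \<in> ev H \<and> x - u \<in> od H", OF _ un] ex by blast
qed

lemma pev_unique: assumes "u \<in> ev H" "x - u \<in> od H" shows "pev H x = u"
proof -
  have "pev H x - u \<in> ev H" using pev assms ev_diff by blast
  moreover have "pev H x - u = (x - u) - (x - pev H x)" by simp
  then have "pev H x - u \<in> od H" using pev assms od_diff by metis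
  ultimately show ?thesis using ev_od by fastforce
qed

lemma pev_ev: "x \<in> ev H \<Longrightarrow> pev H x = x" by (rule pev_unique) auto
lemma pev_od: "x \<in> od H \<Longrightarrow> pev H x = 0" by (rule pev_unique) auto

lemma pev_add: "pev H (x + y) = pev H x + pev H y"
proof (rule pev_unique)
  show "pev H x + pev H y \<in> ev H" using pev ev_add by blast
  have "x + y - (pev H x + pev H y) = (x - pev H x) + (y - pev H y)" by simp
  then show "x + y - (pev H x + pev H y) \<in> od H" using pev od_add by metis
qed

lemma pev_scale: "pev H (sm H c x) = sm H c (pev H x)"
proof (rule pev_unique)
  show "sm H c (pev H x) \<in> ev H" using pev ev_scale by blast
  have "sm H c x - sm H c (pev H x) = sm H c (x - pev H x)" by (simp add: V.scale_right_diff_distrib)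
  then show "sm H c x - sm H c (pev H x) \<in> od H" using pev od_scale by metis
qed

lemma pev_lin: "Vector_Spaces.linear (sm H) (sm H) (pev H)"
  by (rule linI[OF vs vs, of "pev H"]) (rule pev_add, rule pev_scale)

lemma pinv_lin: "Vector_Spaces.linear (sm H) (sm H) (pinv H)"
proof -
  have "pinv H (x + y) = pinv H x + pinv H y" for x y
  proof -
    have "pinv H (x + y) = (pev H x + pev H y) - ((x + y) - (pev H x + pev H y))"
      unfolding pinv_def pev_add ..
    also have "\<dots> = pinv H x + pinv H y" unfolding pinv_def by (simp add: algebra_simps)
    finally show ?thesis .
  qed
  moreover have "pinv H (sm H c x) = sm H c (pinv H x)" for c x
  proof -
    have "pinv H (sm H c x) = sm H c (pev H x) - (sm H c x - sm H c (pev H x))"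
      unfolding pinv_def pev_scale ..
    also have "\<dots> = sm H c (pinv H x)" unfolding pinv_def
      by (simp only: V.scale_right_diff_distrib)
    finally show ?thesis .
  qed
  ultimately show ?thesis by (intro linI[OF vs vs, of "pinv H"])
qed

lemma pinv_ev: "x \<in> ev H \<Longrightarrow> pinv H x = x" by (simp add: pinv_def pev_ev)
lemma pinv_od: "x \<in> od H \<Longrightarrow> pinv H x = - x" by (simp add: pinv_def pev_od)

lemma pinv_pinv[simp]: "pinv H (pinv H x) = x"
proof -
  have e: "pev H x \<in> ev H" and o: "x - pev H x \<in> od H" using pev by auto
  have "pinv H (pinv H x) = pinv H (pev H x) - pinv H (x - pev H x)"
    unfolding pinv_def[of H x] by (rule lin_diff[OF pinv_lin])
  also have "\<dots> = x" using pinv_ev[OF e] pinv_od[OF o] by simp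
  finally show ?thesis .
qed

lemma pinv_fix: assumes "pinv H v = v" and two: "(2::'k) \<noteq> 0" shows "v \<in> ev H"
proof -
  have "(x - pev H x) + (x - pev H x) = 0" if "pev H x - (x - pev H x) = x" for x
    using that by (simp add: algebra_simps)
  then have z: "(v - pev H v) + (v - pev H v) = 0" using assms unfolding pinv_def by blast
  have "sm H 2 (v - pev H v) = (v - pev H v) + (v - pev H v)"
    using V.scale_left_distrib[of 1 1 "v - pev H v"] by (simp add: one_add_one)
  with z two have "v - pev H v = 0" by simp
  then show ?thesis using pev by (metis eq_iff_diff_eq_0)
qed

lemma pinv_antifix: assumes "pinv H v = - v" and two: "(2::'k) \<noteq> 0" shows "v \<in> od H"
proof -
  have "pev H x + pev H x = 0" if "pev H x - (x - pev H x) = - x" for x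
    using that by (simp add: algebra_simps)
  then have z: "pev H v + pev H v = 0" using assms unfolding pinv_def by blast
  have "sm H 2 (pev H v) = pev H v + pev H v"
    using V.scale_left_distrib[of 1 1 "pev H v"] by (simp add: one_add_one)
  with z two have "pev H v = 0" by simp
  then show ?thesis using pev by (metis diff_zero)
qed

end


context chs begin

lemma ax: "\<comment> \<open>associative unital superalgebra\<close>
    (\<forall>y. Vector_Spaces.linear (sm H) (sm H) (\<lambda>x. mul H x y)) \<and>
    (\<forall>x. Vector_Spaces.linear (sm H) (sm H) (mul H x)) \<and>
    (\<forall>x y z. mul H (mul H x y) z = mul H x (mul H y z)) \<and>
    (\<forall>x. mul H (one H) x = x \<and> mul H x (one H) = x) \<and>
    one H \<in> ev H \<and>
    (\<forall>p q x y. homp H p x \<longrightarrow> homp H q y \<longrightarrow> homp H (p \<noteq> q) (mul H x y)) \<and>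
    \<comment> \<open>supercommutativity\<close>
    (\<forall>x y. homog H x \<longrightarrow> homog H y \<longrightarrow>
        mul H x y = sm H (ksgn (par H x) (par H y)) (mul H y x)) \<and>
    \<comment> \<open>coproduct: even linear map given by homogeneous Sweedler lists\<close>
    (\<forall>x. \<forall>(y, z)\<in>set (cop H x). homog H y \<and> homog H z) \<and>
    (\<forall>p x. homp H p x \<longrightarrow> (\<forall>(y, z)\<in>set (cop H x). \<exists>q r. homp H q y \<and> homp H r z \<and> (q \<noteq> r) = p)) \<and>
    (\<forall>x y. teq2 (sm H) (sm H) (cop H (x + y)) (cop H x @ cop H y)) \<and>
    (\<forall>c x. teq2 (sm H) (sm H) (cop H (sm H c x)) (map (\<lambda>(y, z). (sm H c y, z)) (cop H x))) \<and>
    \<comment> \<open>coassociativity\<close>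
    (\<forall>x. teq3 (sm H) (cop2l H x) (cop2r H x)) \<and>
    \<comment> \<open>counit: even linear map\<close>
    Vector_Spaces.linear (sm H) (*) (cou H) \<and>
    (\<forall>x\<in>od H. cou H x = 0) \<and>
    (\<forall>x. (\<Sum>(y, z)\<leftarrow>cop H x. sm H (cou H y) z) = x) \<and>
    (\<forall>x. (\<Sum>(y, z)\<leftarrow>cop H x. sm H (cou H z) y) = x) \<and>
    \<comment> \<open>coproduct and counit are superalgebra maps\<close>
    (\<forall>x y. teq2 (sm H) (sm H) (cop H (mul H x y))
       (concat (map (\<lambda>(x1, x2). map (\<lambda>(y1, y2).
           (sm H (ksgn (par H x2) (par H y1)) (mul H x1 y1), mul H x2 y2)) (cop H y)) (cop H x)))) \<and>
    teq2 (sm H) (sm H) (cop H (one H)) [(one H, one H)] \<and>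
    (\<forall>x y. cou H (mul H x y) = cou H x * cou H y) \<and> cou H (one H) = 1 \<and>
    \<comment> \<open>antipode\<close>
    Vector_Spaces.linear (sm H) (sm H) (ant H) \<and>
    (\<forall>x. (\<Sum>(y, z)\<leftarrow>cop H x. mul H (ant H y) z) = sm H (cou H x) (one H)) \<and>
    (\<forall>x. (\<Sum>(y, z)\<leftarrow>cop H x. mul H y (ant H z)) = sm H (cou H x) (one H))"
  using hopf unfolding comm_hopf_superalg_def by (rule conjunct2)

lemma mul_lin1: "Vector_Spaces.linear (sm H) (sm H) (\<lambda>x. mul H x y)" using ax[THEN conjunct1] by blast
lemma mul_lin2: "Vector_Spaces.linear (sm H) (sm H) (mul H x)" using ax[THEN conjunct2, THEN conjunct1] by blast
lemma mul_assoc: "mul H (mul H x y) z = mul H x (mul H y z)" using ax[THEN conjunct2, THEN conjunct2, THEN conjunct1] by blast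
lemma one_mul[simp]: "mul H (one H) x = x" using ax[THEN conjunct2, THEN conjunct2, THEN conjunct2, THEN conjunct1] by blast
lemma mul_one[simp]: "mul H x (one H) = x" using ax[THEN conjunct2, THEN conjunct2, THEN conjunct2, THEN conjunct1] by blast
lemma one_ev: "one H \<in> ev H" using ax[THEN conjunct2, THEN conjunct2, THEN conjunct2, THEN conjunct2, THEN conjunct1] by blast
lemma mul_homp: "homp H p x \<Longrightarrow> homp H q y \<Longrightarrow> homp H (p \<noteq> q) (mul H x y)" using ax[THEN conjunct2, THEN conjunct2, THEN conjunct2, THEN conjunct2, THEN conjunct2, THEN conjunct1] by blast
lemma cop_homog: "(y, z) \<in> set (cop H x) \<Longrightarrow> homog H y \<and> homog H z" using ax[THEN conjunct2, THEN conjunct2, THEN conjunct2, THEN conjunct2, THEN conjunct2, THEN conjunct2, THEN conjunct2, THEN conjunct1] by fastforce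
lemma cop_par: "homp H p x \<Longrightarrow> (y, z) \<in> set (cop H x) \<Longrightarrow> \<exists>q r. homp H q y \<and> homp H r z \<and> (q \<noteq> r) = p"
  using ax[THEN conjunct2, THEN conjunct2, THEN conjunct2, THEN conjunct2, THEN conjunct2, THEN conjunct2, THEN conjunct2, THEN conjunct2, THEN conjunct1] by fastforce
lemma cop_add: "teq2 (sm H) (sm H) (cop H (x + y)) (cop H x @ cop H y)" using ax[THEN conjunct2, THEN conjunct2, THEN conjunct2, THEN conjunct2, THEN conjunct2, THEN conjunct2, THEN conjunct2, THEN conjunct2, THEN conjunct2, THEN conjunct1] by blast
lemma cop_scale: "teq2 (sm H) (sm H) (cop H (sm H c x)) (map (\<lambda>(y, z). (sm H c y, z)) (cop H x))" using ax[THEN conjunct2, THEN conjunct2, THEN conjunct2, THEN conjunct2, THEN conjunct2, THEN conjunct2, THEN conjunct2, THEN conjunct2, THEN conjunct2, THEN conjunct2, THEN conjunct1] by blast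
lemma coassoc: "teq3 (sm H) (cop2l H x) (cop2r H x)" using ax[THEN conjunct2, THEN conjunct2, THEN conjunct2, THEN conjunct2, THEN conjunct2, THEN conjunct2, THEN conjunct2, THEN conjunct2, THEN conjunct2, THEN conjunct2, THEN conjunct2, THEN conjunct1] by blast
lemma cou_lin: "Vector_Spaces.linear (sm H) (*) (cou H)" using ax[THEN conjunct2, THEN conjunct2, THEN conjunct2, THEN conjunct2, THEN conjunct2, THEN conjunct2, THEN conjunct2, THEN conjunct2, THEN conjunct2, THEN conjunct2, THEN conjunct2, THEN conjunct2, THEN conjunct1] by blast
lemma cou_od: "x \<in> od H \<Longrightarrow> cou H x = 0" using ax[THEN conjunct2, THEN conjunct2, THEN conjunct2, THEN conjunct2, THEN conjunct2, THEN conjunct2, THEN conjunct2, THEN conjunct2, THEN conjunct2, THEN conjunct2, THEN conjunct2, THEN conjunct2, THEN conjunct2, THEN conjunct1] by blast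
lemma counit_l: "(\<Sum>(y, z)\<leftarrow>cop H x. sm H (cou H y) z) = x" using ax[THEN conjunct2, THEN conjunct2, THEN conjunct2, THEN conjunct2, THEN conjunct2, THEN conjunct2, THEN conjunct2, THEN conjunct2, THEN conjunct2, THEN conjunct2, THEN conjunct2, THEN conjunct2, THEN conjunct2, THEN conjunct2, THEN conjunct1] by blast
lemma counit_r: "(\<Sum>(y, z)\<leftarrow>cop H x. sm H (cou H z) y) = x" using ax[THEN conjunct2, THEN conjunct2, THEN conjunct2, THEN conjunct2, THEN conjunct2, THEN conjunct2, THEN conjunct2, THEN conjunct2, THEN conjunct2, THEN conjunct2, THEN conjunct2, THEN conjunct2, THEN conjunct2, THEN conjunct2, THEN conjunct2, THEN conjunct1] by blast
lemma ant_lin: "Vector_Spaces.linear (sm H) (sm H) (ant H)" using ax[THEN conjunct2, THEN conjunct2, THEN conjunct2, THEN conjunct2, THEN conjunct2, THEN conjunct2, THEN conjunct2, THEN conjunct2, THEN conjunct2, THEN conjunct2, THEN conjunct2, THEN conjunct2, THEN conjunct2, THEN conjunct2, THEN conjunct2, THEN conjunct2, THEN conjunct2, THEN conjunct2, THEN conjunct2, THEN conjunct2, THEN conjunct1] by blast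
lemma ant_l: "(\<Sum>(y, z)\<leftarrow>cop H x. mul H (ant H y) z) = sm H (cou H x) (one H)" using ax[THEN conjunct2, THEN conjunct2, THEN conjunct2, THEN conjunct2, THEN conjunct2, THEN conjunct2, THEN conjunct2, THEN conjunct2, THEN conjunct2, THEN conjunct2, THEN conjunct2, THEN conjunct2, THEN conjunct2, THEN conjunct2, THEN conjunct2, THEN conjunct2, THEN conjunct2, THEN conjunct2, THEN conjunct2, THEN conjunct2, THEN conjunct2, THEN conjunct1] by blast
lemma ant_r: "(\<Sum>(y, z)\<leftarrow>cop H x. mul H y (ant H z)) = sm H (cou H x) (one H)" using ax[THEN conjunct2, THEN conjunct2, THEN conjunct2, THEN conjunct2, THEN conjunct2, THEN conjunct2, THEN conjunct2, THEN conjunct2, THEN conjunct2, THEN conjunct2, THEN conjunct2, THEN conjunct2, THEN conjunct2, THEN conjunct2, THEN conjunct2, THEN conjunct2, THEN conjunct2, THEN conjunct2, THEN conjunct2, THEN conjunct2, THEN conjunct2, THEN conjunct2] by blast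

lemma homp_F: "homp H False x \<longleftrightarrow> x \<in> ev H" by (simp add: homp_def)
lemma homp_T: "homp H True x \<longleftrightarrow> x \<in> od H" by (simp add: homp_def)

lemma mul_ee: "x \<in> ev H \<Longrightarrow> y \<in> ev H \<Longrightarrow> mul H x y \<in> ev H" using mul_homp[of False x False y] by (simp add: homp_def)
lemma mul_eo: "x \<in> ev H \<Longrightarrow> y \<in> od H \<Longrightarrow> mul H x y \<in> od H" using mul_homp[of False x True y] by (simp add: homp_def)
lemma mul_oe: "x \<in> od H \<Longrightarrow> y \<in> ev H \<Longrightarrow> mul H x y \<in> od H" using mul_homp[of True x False y] by (simp add: homp_def)
lemma mul_oo: "x \<in> od H \<Longrightarrow> y \<in> od H \<Longrightarrow> mul H x y \<in> ev H" using mul_homp[of True x True y] by (simp add: homp_def)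

lemma pinv_mul: "pinv H (mul H x y) = mul H (pinv H x) (pinv H y)"
proof -
  define e1 where "e1 = pev H x"
  define o1 where "o1 = x - pev H x"
  define e2 where "e2 = pev H y"
  define o2 where "o2 = y - pev H y"
  have h: "e1 \<in> ev H" "o1 \<in> od H" "e2 \<in> ev H" "o2 \<in> od H" using pev unfolding e1_def o1_def e2_def o2_def by auto
  have x: "x = e1 + o1" and y: "y = e2 + o2" unfolding e1_def o1_def e2_def o2_def by simp_all
  have px: "pinv H x = e1 - o1" and py: "pinv H y = e2 - o2" unfolding pinv_def e1_def o1_def e2_def o2_def by simp_all
  have m1: "mul H (a + b) c = mul H a c + mul H b c" for a b c by (rule lin_add[OF mul_lin1])
  have m2: "mul H a (b + c) = mul H a b + mul H a c" for a b c by (rule lin_add[OF mul_lin2])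
  have m3: "mul H (a - b) c = mul H a c - mul H b c" for a b c by (rule lin_diff[OF mul_lin1])
  have m4: "mul H a (b - c) = mul H a b - mul H a c" for a b c by (rule lin_diff[OF mul_lin2])
  have pa: "pinv H (a + b) = pinv H a + pinv H b" for a b by (rule lin_add[OF pinv_lin])
  have "pinv H (mul H x y) = pinv H (mul H e1 e2) + pinv H (mul H e1 o2) + (pinv H (mul H o1 e2) + pinv H (mul H o1 o2))"
    unfolding x y m1 m2 pa by (simp add: ac_simps)
  also have "\<dots> = mul H e1 e2 - mul H e1 o2 + (- mul H o1 e2 + mul H o1 o2)"
    using h by (simp add: pinv_ev pinv_od mul_ee mul_eo mul_oe mul_oo)
  also have "\<dots> = mul H (pinv H x) (pinv H y)" unfolding px py m3 m4 by (simp add: algebra_simps)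
  finally show ?thesis .
qed

lemma pinv_one: "pinv H (one H) = one H" by (rule pinv_ev[OF one_ev])

lemma cou_pinv: "cou H (pinv H x) = cou H x"
proof -
  have "cou H (pinv H x) = cou H (pev H x) - cou H (x - pev H x)" unfolding pinv_def by (rule lin_diff[OF cou_lin])
  moreover have "cou H (x - pev H x) = 0" using pev cou_od by blast
  moreover have "cou H (x - pev H x) = cou H x - cou H (pev H x)" by (rule lin_diff[OF cou_lin])
  ultimately show ?thesis by simp
qed

lemma supercomm: "homog H x \<Longrightarrow> homog H y \<Longrightarrow> mul H x y = sm H (ksgn (par H x) (par H y)) (mul H y x)" using ax[THEN conjunct2, THEN conjunct2, THEN conjunct2, THEN conjunct2, THEN conjunct2, THEN conjunct2, THEN conjunct1] by blast
lemma cop_one: "teq2 (sm H) (sm H) (cop H (one H)) [(one H, one H)]" using ax[THEN conjunct2, THEN conjunct2, THEN conjunct2, THEN conjunct2, THEN conjunct2, THEN conjunct2, THEN conjunct2, THEN conjunct2, THEN conjunct2, THEN conjunct2, THEN conjunct2, THEN conjunct2, THEN conjunct2, THEN conjunct2, THEN conjunct2, THEN conjunct2, THEN conjunct2, THEN conjunct1] by blast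
lemma cou_one: "cou H (one H) = 1" using ax[THEN conjunct2, THEN conjunct2, THEN conjunct2, THEN conjunct2, THEN conjunct2, THEN conjunct2, THEN conjunct2, THEN conjunct2, THEN conjunct2, THEN conjunct2, THEN conjunct2, THEN conjunct2, THEN conjunct2, THEN conjunct2, THEN conjunct2, THEN conjunct2, THEN conjunct2, THEN conjunct2, THEN conjunct2, THEN conjunct1] by blast

lemma homog_cases: "homog H x \<Longrightarrow> x \<in> ev H \<or> x \<in> od H" by (simp add: homog_def)

end


lemma vs_scale_sum_list2: "vector_space s \<Longrightarrow> s c (\<Sum>(x, y)\<leftarrow>xs. f x y) = (\<Sum>(x, y)\<leftarrow>xs. s c (f x y))"
  by (rule lin_sum_list2[OF vector_space.linear_scale_self])

lemma sum_list_neg2: "(\<Sum>(x, y)\<leftarrow>xs. - (f x y :: 'a::ab_group_add)) = - (\<Sum>(x, y)\<leftarrow>xs. f x y)"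
  by (induction xs) auto

lemma sum_concat2r: "(\<Sum>(a, b, c)\<leftarrow>concat (map (\<lambda>(y, z). map (\<lambda>(z1, z2). (y, z1, z2)) (C z)) L). F a b c)
   = (\<Sum>(y, z)\<leftarrow>L. \<Sum>(z1, z2)\<leftarrow>C z. F y z1 z2)"
proof (induction L)
  case Nil then show ?case by simp
next
  case (Cons p L)
  obtain y z where p: "p = (y, z)" by (cases p)
  have "(\<Sum>(a, b, c)\<leftarrow>map (\<lambda>(z1, z2). (y, z1, z2)) M. F a b c) = (\<Sum>(z1, z2)\<leftarrow>M. F y z1 z2)" for M
    by (induction M) auto
  then show ?case using Cons by (simp add: p)
qed

lemma sum_concat2l: "(\<Sum>(a, b, c)\<leftarrow>concat (map (\<lambda>(y, z). map (\<lambda>(y1, y2). (y1, y2, z)) (C y)) L). F a b c)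
   = (\<Sum>(y, z)\<leftarrow>L. \<Sum>(y1, y2)\<leftarrow>C y. F y1 y2 z)"
proof (induction L)
  case Nil then show ?case by simp
next
  case (Cons p L)
  obtain y z where p: "p = (y, z)" by (cases p)
  have "(\<Sum>(a, b, c)\<leftarrow>map (\<lambda>(y1, y2). (y1, y2, z)) M. F a b c) = (\<Sum>(y1, y2)\<leftarrow>M. F y1 y2 z)" for M
    by (induction M) auto
  then show ?case using Cons by (simp add: p)
qed

context chs begin

lemma sum_cop2r: "(\<Sum>(a, b, c)\<leftarrow>cop2r H x. F a b c) = (\<Sum>(y, z)\<leftarrow>cop H x. \<Sum>(z1, z2)\<leftarrow>cop H z. F y z1 z2)"
  unfolding cop2r_def by (rule sum_concat2r)
lemma sum_cop2l: "(\<Sum>(a, b, c)\<leftarrow>cop2l H x. F a b c) = (\<Sum>(y, z)\<leftarrow>cop H x. \<Sum>(y1, y2)\<leftarrow>cop H y. F y1 y2 z)"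
  unfolding cop2l_def by (rule sum_concat2l)

lemma copsum_lin:
  assumes vs3: "vector_space s3"
    and l1: "\<And>z. Vector_Spaces.linear (sm H) s3 (\<lambda>y. F y z)" and l2: "\<And>y. Vector_Spaces.linear (sm H) s3 (F y)"
  shows "Vector_Spaces.linear (sm H) s3 (\<lambda>x. \<Sum>(y, z)\<leftarrow>cop H x. F y z)"
proof (intro linI[OF vs vs3])
  fix x y
  show "(\<Sum>(y, z)\<leftarrow>cop H (x + y). F y z) = (\<Sum>(y, z)\<leftarrow>cop H x. F y z) + (\<Sum>(y, z)\<leftarrow>cop H y. F y z)"
    using teq2_transfer[OF cop_add vs3 l1 l2] by simp
next
  fix c x
  have "(\<Sum>(y, z)\<leftarrow>cop H (sm H c x). F y z) = (\<Sum>(y, z)\<leftarrow>map (\<lambda>(y, z). (sm H c y, z)) (cop H x). F y z)"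
    using teq2_transfer[OF cop_scale vs3 l1 l2] by simp
  also have "\<dots> = (\<Sum>(y, z)\<leftarrow>cop H x. s3 c (F y z))"
  proof -
    have "(\<Sum>(y, z)\<leftarrow>map (\<lambda>(y, z). (sm H c y, z)) M. F y z) = (\<Sum>(y, z)\<leftarrow>M. s3 c (F y z))" for M
      by (induction M) (auto simp: lin_scale[OF l1])
    then show ?thesis .
  qed
  also have "\<dots> = s3 c (\<Sum>(y, z)\<leftarrow>cop H x. F y z)" by (rule vs_scale_sum_list2[OF vs3, symmetric])
  finally show "(\<Sum>(y, z)\<leftarrow>cop H (sm H c x). F y z) = s3 c (\<Sum>(y, z)\<leftarrow>cop H x. F y z)" .
qed

lemma pinv_term:
  assumes l1: "\<And>z. Vector_Spaces.linear (sm H) s3 (\<lambda>y. F y z)" and l2: "\<And>y. Vector_Spaces.linear (sm H) s3 (F y)"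
    and "homp H q y" "homp H r z"
  shows "F (pinv H y) (pinv H z) = (if q = r then F y z else - F y z)"
  using assms(3,4)
  by (cases q; cases r) (auto simp: homp_def pinv_ev pinv_od lin_neg[OF l1] lin_neg[OF l2])

lemma cop_pinv:
  assumes vs3: "vector_space s3"
    and l1: "\<And>z. Vector_Spaces.linear (sm H) s3 (\<lambda>y. F y z)" and l2: "\<And>y. Vector_Spaces.linear (sm H) s3 (F y)"
  shows "(\<Sum>(y, z)\<leftarrow>cop H x. F (pinv H y) (pinv H z)) = (\<Sum>(y, z)\<leftarrow>cop H (pinv H x). F y z)"
proof -
  define G where "G = (\<lambda>y z. F (pinv H y) (pinv H z))"
  have g1: "Vector_Spaces.linear (sm H) s3 (\<lambda>y. G y z)" for z
    unfolding G_def by (rule lin_comp[OF pinv_lin l1])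
  have g2: "Vector_Spaces.linear (sm H) s3 (G y)" for y
    unfolding G_def by (rule lin_comp[OF pinv_lin l2])
  note LG = copsum_lin[OF vs3 g1 g2] and LF = copsum_lin[OF vs3 l1 l2]
  define e where "e = pev H x"
  define xo where "xo = x - pev H x"
  have e: "e \<in> ev H" and o: "xo \<in> od H" using pev unfolding e_def xo_def by auto
  have x: "x = e + xo" unfolding e_def xo_def by simp
  have px: "pinv H x = e - xo" by (simp only: pinv_def e_def xo_def)
  have E: "(\<Sum>(y, z)\<leftarrow>cop H e. G y z) = (\<Sum>(y, z)\<leftarrow>cop H e. F y z)"
  proof (intro arg_cong[where f=sum_list] map_cong refl)
    fix p assume p: "p \<in> set (cop H e)"
    obtain y z where yz: "p = (y, z)" by (cases p)
    from cop_par[of False e y z] p e yz obtain q r where "homp H q y" "homp H r z" "q = r"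
      by (auto simp: homp_def)
    then show "(case p of (y, z) \<Rightarrow> G y z) = (case p of (y, z) \<Rightarrow> F y z)"
      using pinv_term[OF l1 l2] yz unfolding G_def by auto
  qed
  have O: "(\<Sum>(y, z)\<leftarrow>cop H xo. G y z) = (\<Sum>(y, z)\<leftarrow>cop H xo. - F y z)"
  proof (intro arg_cong[where f=sum_list] map_cong refl)
    fix p assume p: "p \<in> set (cop H xo)"
    obtain y z where yz: "p = (y, z)" by (cases p)
    from cop_par[of True xo y z] p o yz obtain q r where "homp H q y" "homp H r z" "q \<noteq> r"
      by (auto simp: homp_def)
    then show "(case p of (y, z) \<Rightarrow> G y z) = (case p of (y, z) \<Rightarrow> - F y z)"
      using pinv_term[OF l1 l2] yz unfolding G_def by auto
  qed
  have "(\<Sum>(y, z)\<leftarrow>cop H x. G y z) = (\<Sum>(y, z)\<leftarrow>cop H e. G y z) + (\<Sum>(y, z)\<leftarrow>cop H xo. G y z)"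
    unfolding x by (rule lin_add[OF LG])
  also have "\<dots> = (\<Sum>(y, z)\<leftarrow>cop H e. F y z) - (\<Sum>(y, z)\<leftarrow>cop H xo. F y z)"
    unfolding E O sum_list_neg2 by simp
  also have "\<dots> = (\<Sum>(y, z)\<leftarrow>cop H (pinv H x). F y z)"
    unfolding px by (rule lin_diff[OF LF, symmetric])
  finally show ?thesis unfolding G_def .
qed

end


context chs begin

lemma ant_pinv: "ant H (pinv H x) = pinv H (ant H x)"
proof -
  define S' where "S' = (\<lambda>x. pinv H (ant H (pinv H x)))"
  have S'lin: "Vector_Spaces.linear (sm H) (sm H) S'"
    unfolding S'_def by (rule lin_comp[OF lin_comp[OF pinv_lin ant_lin] pinv_lin])
  have f1: "Vector_Spaces.linear (sm H) (sm H) (\<lambda>y. mul H (ant H y) z)" for z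
    by (rule lin_comp[OF ant_lin mul_lin1])
  have left: "(\<Sum>(y, z)\<leftarrow>cop H x. mul H (S' y) z) = sm H (cou H x) (one H)" for x
  proof -
    have "mul H (S' y) z = pinv H (mul H (ant H (pinv H y)) (pinv H z))" for y z
      by (simp add: S'_def pinv_mul)
    then have "(\<Sum>(y, z)\<leftarrow>cop H x. mul H (S' y) z) = (\<Sum>(y, z)\<leftarrow>cop H x. pinv H (mul H (ant H (pinv H y)) (pinv H z)))"
      by simp
    also have "\<dots> = pinv H (\<Sum>(y, z)\<leftarrow>cop H x. mul H (ant H (pinv H y)) (pinv H z))"
      by (rule lin_sum_list2[OF pinv_lin, symmetric])
    also have "(\<Sum>(y, z)\<leftarrow>cop H x. mul H (ant H (pinv H y)) (pinv H z)) = (\<Sum>(y, z)\<leftarrow>cop H (pinv H x). mul H (ant H y) z)"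
      by (rule cop_pinv[OF vs f1 mul_lin2])
    also have "\<dots> = sm H (cou H x) (one H)" by (simp add: ant_l cou_pinv)
    also have "pinv H (sm H (cou H x) (one H)) = sm H (cou H x) (one H)"
      by (simp add: lin_scale[OF pinv_lin] pinv_one)
    finally show ?thesis .
  qed
  have eq: "ant H x = S' x" for x
  proof -
    define F where "F = (\<lambda>a b c. mul H (S' a) (mul H b (ant H c)))"
    have t1: "Vector_Spaces.linear (sm H) (sm H) (\<lambda>a. F a b c)" for b c
      unfolding F_def by (rule lin_comp[OF S'lin mul_lin1])
    have t2: "Vector_Spaces.linear (sm H) (sm H) (\<lambda>b. F a b c)" for a c
      unfolding F_def by (rule lin_comp[OF mul_lin1 mul_lin2])
    have t3: "Vector_Spaces.linear (sm H) (sm H) (F a b)" for a b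
      unfolding F_def by (rule lin_comp[OF lin_comp[OF ant_lin mul_lin2] mul_lin2])
    have "(\<Sum>(a, b, c)\<leftarrow>cop2r H x. F a b c) = (\<Sum>(y, z)\<leftarrow>cop H x. \<Sum>(z1, z2)\<leftarrow>cop H z. mul H (S' y) (mul H z1 (ant H z2)))"
      unfolding F_def by (rule sum_cop2r)
    also have "\<dots> = (\<Sum>(y, z)\<leftarrow>cop H x. mul H (S' y) (\<Sum>(z1, z2)\<leftarrow>cop H z. mul H z1 (ant H z2)))"
      by (simp add: lin_sum_list2[OF mul_lin2])
    also have "\<dots> = (\<Sum>(y, z)\<leftarrow>cop H x. sm H (cou H z) (S' y))"
      by (simp add: ant_r lin_scale[OF mul_lin2])
    also have "\<dots> = S' x"
    proof -
      have "S' (\<Sum>(y, z)\<leftarrow>cop H x. sm H (cou H z) y) = (\<Sum>(y, z)\<leftarrow>cop H x. S' (sm H (cou H z) y))"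
        by (rule lin_sum_list2[OF S'lin])
      then show ?thesis using counit_r[of x] by (simp add: lin_scale[OF S'lin])
    qed
    finally have R: "(\<Sum>(a, b, c)\<leftarrow>cop2r H x. F a b c) = S' x" .
    have "(\<Sum>(a, b, c)\<leftarrow>cop2l H x. F a b c) = (\<Sum>(y, z)\<leftarrow>cop H x. \<Sum>(y1, y2)\<leftarrow>cop H y. mul H (S' y1) (mul H y2 (ant H z)))"
      unfolding F_def by (rule sum_cop2l)
    also have "\<dots> = (\<Sum>(y, z)\<leftarrow>cop H x. \<Sum>(y1, y2)\<leftarrow>cop H y. mul H (mul H (S' y1) y2) (ant H z))"
      by (simp add: mul_assoc)
    also have "\<dots> = (\<Sum>(y, z)\<leftarrow>cop H x. mul H (\<Sum>(y1, y2)\<leftarrow>cop H y. mul H (S' y1) y2) (ant H z))"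
      by (simp add: lin_sum_list2[OF mul_lin1])
    also have "\<dots> = (\<Sum>(y, z)\<leftarrow>cop H x. sm H (cou H y) (ant H z))"
      by (simp add: left lin_scale[OF mul_lin1])
    also have "\<dots> = ant H x"
    proof -
      have "ant H (\<Sum>(y, z)\<leftarrow>cop H x. sm H (cou H y) z) = (\<Sum>(y, z)\<leftarrow>cop H x. ant H (sm H (cou H y) z))"
        by (rule lin_sum_list2[OF ant_lin])
      then show ?thesis using counit_l[of x] by (simp add: lin_scale[OF ant_lin])
    qed
    finally have L: "(\<Sum>(a, b, c)\<leftarrow>cop2l H x. F a b c) = ant H x" .
    show ?thesis using teq3_transfer[OF coassoc vs t1 t2 t3] L R by simp
  qed
  show ?thesis using eq[of "pinv H x"] by (simp add: S'_def)
qed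

lemma ant_od: assumes "(2::'k) \<noteq> 0" "x \<in> od H" shows "ant H x \<in> od H"
proof (rule pinv_antifix[OF _ assms(1)])
  show "pinv H (ant H x) = - ant H x"
    using ant_pinv[of x] pinv_od[OF assms(2)] lin_neg[OF ant_lin] by simp
qed

lemma ant_ev: assumes "(2::'k) \<noteq> 0" "x \<in> ev H" shows "ant H x \<in> ev H"
proof (rule pinv_fix[OF _ assms(1)])
  show "pinv H (ant H x) = ant H x"
    using ant_pinv[of x] pinv_ev[OF assms(2)] by simp
qed

end


lemma sum_map_pair: "(\<Sum>(a, b)\<leftarrow>map (\<lambda>(y, z). (f y, g z)) L. K a b) = (\<Sum>(y, z)\<leftarrow>L. K (f y) (g z))"
  by (induction L) auto

lemma sum_map_trip: "(\<Sum>(c, b)\<leftarrow>map (\<lambda>(x1, x2, x3). (f x1 x2 x3, g x1 x2 x3)) L. K c b) = (\<Sum>(x1, x2, x3)\<leftarrow>L. K (f x1 x2 x3) (g x1 x2 x3))"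
  by (induction L) auto

lemma lin_sum_fun: "vector_space s1 \<Longrightarrow> vector_space s2 \<Longrightarrow> (\<And>y z. Vector_Spaces.linear s1 s2 (\<lambda>x. F x y z)) \<Longrightarrow>
  Vector_Spaces.linear s1 s2 (\<lambda>x. \<Sum>(y, z)\<leftarrow>L. F x y z)"
proof (induction L)
  case Nil
  have m2: "module s2" using Nil.prems(2) by (simp add: module_iff_vector_space)
  show ?case by (intro linI Nil.prems(1,2)) (auto simp: module.scale_zero_right[OF m2])
next
  case (Cons p L)
  obtain y z where p: "p = (y, z)" by (cases p)
  have l1: "Vector_Spaces.linear s1 s2 (\<lambda>x. F x y z)" by (rule Cons.prems)
  have l2: "Vector_Spaces.linear s1 s2 (\<lambda>x. \<Sum>(y, z)\<leftarrow>L. F x y z)" using Cons by blast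
  show ?case unfolding p
    by (intro linI[OF Cons.prems(1,2)])
       (simp_all add: lin_add[OF l1] lin_add[OF l2] lin_scale[OF l1] lin_scale[OF l2]
          module.scale_right_distrib[OF Cons.prems(2)[unfolded module_iff_vector_space[symmetric]]] algebra_simps)
qed

locale mainloc = A: chs A + B: chs B
  for A :: "('k::field, 'a::ab_group_add) hsalg" and B :: "('k, 'b::ab_group_add) hsalg" +
  fixes \<pi> :: "'a \<Rightarrow> 'b" and \<phi> :: "'b \<Rightarrow> 'k" and \<chi> :: 'a and a :: 'b
  assumes two: "(2::'k) \<noteq> 0"
    and hom: "hopf_superalg_hom A B \<pi>" and surj: "surj \<pi>"
    and li: "left_integral B \<phi>" and nz: "\<phi> \<noteq> (\<lambda>_. 0)" and hf: "homog_functional B \<phi>"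
    and gl: "group_like A \<chi>" and co: "coacts_by A \<pi> B \<phi> \<chi>"
    and dg: "distinguished_gl B \<phi> a"
begin

lemma pl: "Vector_Spaces.linear (sm A) (sm B) \<pi>" using hom by (simp add: hopf_superalg_hom_def)
lemma ppar: "homp A p x \<Longrightarrow> homp B p (\<pi> x)" using hom by (simp add: hopf_superalg_hom_def)
lemma pmul: "\<pi> (mul A x y) = mul B (\<pi> x) (\<pi> y)" using hom by (simp add: hopf_superalg_hom_def)
lemma pcop: "teq2 (sm B) (sm B) (cop B (\<pi> x)) (map (\<lambda>(y, z). (\<pi> y, \<pi> z)) (cop A x))"
  using hom by (simp add: hopf_superalg_hom_def)
lemma pant: "ant B (\<pi> x) = \<pi> (ant A x)" using hom by (simp add: hopf_superalg_hom_def)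
lemma pi_ev: "x \<in> ev A \<Longrightarrow> \<pi> x \<in> ev B" using ppar[of False x] by (simp add: homp_def)
lemma pi_od: "x \<in> od A \<Longrightarrow> \<pi> x \<in> od B" using ppar[of True x] by (simp add: homp_def)

lemma pi_pinv: "\<pi> (pinv A x) = pinv B (\<pi> x)"
proof -
  have "pev B (\<pi> x) = \<pi> (pev A x)"
  proof (rule B.pev_unique)
    show "\<pi> (pev A x) \<in> ev B" using A.pev pi_ev by blast
    show "\<pi> x - \<pi> (pev A x) \<in> od B" using A.pev pi_od lin_diff[OF pl] by metis
  qed
  then show ?thesis unfolding pinv_def by (simp add: lin_diff[OF pl])
qed

lemma phil: "Vector_Spaces.linear (sm B) (*) \<phi>"
  using li by (simp add: left_integral_def dual_space_def)

definition P0 where "P0 \<longleftrightarrow> (\<forall>x\<in>od B. \<phi> x = 0)"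
definition QA where "QA x = (if P0 then x else pinv A x)"
definition QB where "QB x = (if P0 then x else pinv B x)"

lemma notP0: "\<not> P0 \<Longrightarrow> x \<in> ev B \<Longrightarrow> \<phi> x = 0"
  using hf unfolding homog_functional_def P0_def by blast
lemma P0D: "P0 \<Longrightarrow> x \<in> od B \<Longrightarrow> \<phi> x = 0"
  unfolding P0_def by blast

lemma QB_lin: "Vector_Spaces.linear (sm B) (sm B) QB"
  unfolding QB_def by (intro linI[OF B.vs B.vs]) (auto simp: lin_add[OF B.pinv_lin] lin_scale[OF B.pinv_lin])
lemma QB_QB[simp]: "QB (QB x) = x" unfolding QB_def by simp
lemma QB_ev: "x \<in> ev B \<Longrightarrow> QB x = x" unfolding QB_def by (simp add: B.pinv_ev)
lemma pi_QA: "\<pi> (QA x) = QB (\<pi> x)" unfolding QA_def QB_def by (simp add: pi_pinv)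

lemma sign_li:
  assumes h: "Vector_Spaces.linear (sm B) (*) h" and y1: "homog B y1" and y2: "homog B y2"
  shows "ksgn (par B y1) (par B y2) * h y1 * \<phi> y2 = h (QB y1) * \<phi> y2"
proof (cases P0)
  case True
  then show ?thesis using P0D[OF True, of y2] by (cases "y2 \<in> od B") (auto simp: ksgn_def par_def QB_def)
next
  case False
  show ?thesis
  proof (cases "y2 \<in> ev B")
    case True then show ?thesis using notP0[OF False] by simp
  next
    case y2e: False
    then have "y2 \<in> od B" using y2 by (simp add: homog_def)
    then show ?thesis using y1 False
      by (cases "y1 \<in> od B") (auto simp: ksgn_def par_def QB_def homog_def B.pinv_od B.pinv_ev lin_neg[OF h])
  qed
qed

lemma sign_dg:
  assumes h: "Vector_Spaces.linear (sm B) (*) h" and y1: "homog B y1" and y2: "homog B y2"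
  shows "ksgn (par B y1) (par B y2) * \<phi> y1 * h y2 = \<phi> y1 * h (QB y2)"
proof -
  have k: "ksgn (par B y1) (par B y2) = (ksgn (par B y2) (par B y1) :: 'k)" by (auto simp: ksgn_def)
  have "ksgn (par B y1) (par B y2) * \<phi> y1 * h y2 = ksgn (par B y2) (par B y1) * h y2 * \<phi> y1" by (simp add: k mult_ac)
  also have "\<dots> = h (QB y2) * \<phi> y1" by (rule sign_li[OF h y2 y1])
  finally show ?thesis by (simp add: mult_ac)
qed

lemma LIid: "(\<Sum>(u1, u2)\<leftarrow>cop B u. sm B (\<phi> u2) (QB u1)) = sm B (\<phi> u) (one B)"
proof (rule sep[OF B.vs])
  fix h :: "'b \<Rightarrow> 'k" assume h: "Vector_Spaces.linear (sm B) (*) h"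
  have "h (\<Sum>(u1, u2)\<leftarrow>cop B u. sm B (\<phi> u2) (QB u1)) = (\<Sum>(u1, u2)\<leftarrow>cop B u. h (sm B (\<phi> u2) (QB u1)))"
    by (rule lin_sum_list2[OF h])
  also have "\<dots> = (\<Sum>(u1, u2)\<leftarrow>cop B u. ksgn (par B u1) (par B u2) * h u1 * \<phi> u2)"
  proof (intro arg_cong[where f=sum_list] map_cong refl)
    fix p assume pin: "p \<in> set (cop B u)"
    obtain u1 u2 where p1: "p = (u1, u2)" by (cases p)
    with pin have p: "p = (u1, u2)" "(u1, u2) \<in> set (cop B u)" by simp_all
    show "(case p of (u1, u2) \<Rightarrow> h (sm B (\<phi> u2) (QB u1))) = (case p of (u1, u2) \<Rightarrow> ksgn (par B u1) (par B u2) * h u1 * \<phi> u2)"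
    proof -
      have hh: "ksgn (par B u1) (par B u2) * h u1 * \<phi> u2 = h (QB u1) * \<phi> u2"
        using sign_li[OF h] B.cop_homog[OF p(2)] by blast
      show ?thesis unfolding p(1) by (simp only: hh lin_scale[OF h] prod.case) (simp add: mult.commute)
    qed
  qed
  also have "\<dots> = conv B h \<phi> u" by (simp add: conv_def)
  also have "\<dots> = h (one B) * \<phi> u" using li h by (simp add: left_integral_def dual_space_def)
  also have "\<dots> = h (sm B (\<phi> u) (one B))" by (simp add: lin_scale[OF h])
  finally show "h (\<Sum>(u1, u2)\<leftarrow>cop B u. sm B (\<phi> u2) (QB u1)) = h (sm B (\<phi> u) (one B))" .
qed

lemma DGid0: "(\<Sum>(u1, u2)\<leftarrow>cop B u. sm B (\<phi> u1) (QB u2)) = sm B (\<phi> u) a"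
proof (rule sep[OF B.vs])
  fix h :: "'b \<Rightarrow> 'k" assume h: "Vector_Spaces.linear (sm B) (*) h"
  have "h (\<Sum>(u1, u2)\<leftarrow>cop B u. sm B (\<phi> u1) (QB u2)) = (\<Sum>(u1, u2)\<leftarrow>cop B u. h (sm B (\<phi> u1) (QB u2)))"
    by (rule lin_sum_list2[OF h])
  also have "\<dots> = (\<Sum>(u1, u2)\<leftarrow>cop B u. ksgn (par B u1) (par B u2) * \<phi> u1 * h u2)"
  proof (intro arg_cong[where f=sum_list] map_cong refl)
    fix p assume pin: "p \<in> set (cop B u)"
    obtain u1 u2 where p1: "p = (u1, u2)" by (cases p)
    with pin have p: "p = (u1, u2)" "(u1, u2) \<in> set (cop B u)" by simp_all
    show "(case p of (u1, u2) \<Rightarrow> h (sm B (\<phi> u1) (QB u2))) = (case p of (u1, u2) \<Rightarrow> ksgn (par B u1) (par B u2) * \<phi> u1 * h u2)"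
    proof -
      have hh: "ksgn (par B u1) (par B u2) * \<phi> u1 * h u2 = \<phi> u1 * h (QB u2)"
        using sign_dg[OF h] B.cop_homog[OF p(2)] by blast
      show ?thesis unfolding p(1) by (simp only: hh lin_scale[OF h] prod.case)
    qed
  qed
  also have "\<dots> = conv B \<phi> h u" by (simp add: conv_def)
  also have "\<dots> = h a * \<phi> u" using dg h by (simp add: distinguished_gl_def dual_space_def)
  also have "\<dots> = h (sm B (\<phi> u) a)" by (simp add: lin_scale[OF h])
  finally show "h (\<Sum>(u1, u2)\<leftarrow>cop B u. sm B (\<phi> u1) (QB u2)) = h (sm B (\<phi> u) a)" .
qed

lemma DGid: "(\<Sum>(u1, u2)\<leftarrow>cop B u. sm B (\<phi> u1) u2) = sm B (\<phi> u) (QB a)"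
proof -
  have "QB (\<Sum>(u1, u2)\<leftarrow>cop B u. sm B (\<phi> u1) u2) = (\<Sum>(u1, u2)\<leftarrow>cop B u. QB (sm B (\<phi> u1) u2))"
    by (rule lin_sum_list2[OF QB_lin])
  also have "\<dots> = sm B (\<phi> u) a" using DGid0 by (simp add: lin_scale[OF QB_lin])
  finally have "QB (\<Sum>(u1, u2)\<leftarrow>cop B u. sm B (\<phi> u1) u2) = sm B (\<phi> u) a" .
  then have "QB (QB (\<Sum>(u1, u2)\<leftarrow>cop B u. sm B (\<phi> u1) u2)) = QB (sm B (\<phi> u) a)" by simp
  then show ?thesis by (simp add: lin_scale[OF QB_lin])
qed

end


context chs begin
lemma cop2r_homog: "(x1, x2, x3) \<in> set (cop2r H x) \<Longrightarrow> homog H x1 \<and> homog H x2 \<and> homog H x3"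
  unfolding cop2r_def by (auto dest: cop_homog)
lemma par_scale: "c \<noteq> 0 \<Longrightarrow> par H (sm H c m) = par H m"
proof -
  assume c: "c \<noteq> 0"
  have "sm H (inverse c) (sm H c m) = m" using c by simp
  then show ?thesis unfolding par_def using od_scale by metis
qed
end

context mainloc begin

lemma co_term:
  assumes h1: "homog A x1" and h2: "homog A x2" and h3: "homog A x3"
  shows "sm A (ksgn (par A (sm A (ksgn (par A x2) (par A x3)) (mul A x1 (ant A x3)))) (par B (\<pi> x2)) * \<phi> (\<pi> x2))
      (sm A (ksgn (par A x2) (par A x3)) (mul A x1 (ant A x3)))
    = sm A (\<phi> (\<pi> x2)) (mul A (QA x1) (ant A x3))"
proof -
  define m where "m = mul A x1 (ant A x3)"
  define f where "f = \<phi> (\<pi> x2)"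
  have ks0: "ksgn p q \<noteq> (0::'k)" for p q by (simp add: ksgn_def)
  have parc: "par A (sm A (ksgn p q) m) = par A m" for p q by (rule A.par_scale[OF ks0])
  have "sm A (ksgn (par A (sm A (ksgn (par A x2) (par A x3)) m)) (par B (\<pi> x2)) * f) (sm A (ksgn (par A x2) (par A x3)) m)
     = sm A f (mul A (QA x1) (ant A x3))"
  proof (cases "f = 0")
    case True then show ?thesis by simp
  next
    case fnz: False
    show ?thesis
    proof (cases P0)
      case True
      have "\<pi> x2 \<notin> od B" using P0D[OF True] fnz f_def by blast
      then have "x2 \<notin> od A" using pi_od by blast
      then show ?thesis using \<open>\<pi> x2 \<notin> od B\<close> True by (simp add: parc par_def ksgn_def QA_def m_def)
    next
      case nP0: False
      have "\<pi> x2 \<notin> ev B" using notP0[OF nP0] fnz f_def by blast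
      then have "x2 \<notin> ev A" using pi_ev by blast
      then have "x2 \<in> od A" using h2 by (simp add: homog_def)
      then have x2o: "par A x2" "par B (\<pi> x2)" using pi_od by (auto simp: par_def)
      have QA: "QA x1 = pinv A x1" using nP0 by (simp add: QA_def)
      have negm: "mul A (- x1) (ant A x3) = - m" unfolding m_def by (rule lin_neg[OF A.mul_lin1])
      show ?thesis
      proof (cases "m = 0")
        case True
        then show ?thesis using h1 negm unfolding m_def
          by (auto simp: QA homog_def A.pinv_ev A.pinv_od)
      next
        case mnz: False
        have x1nz: "x1 \<noteq> 0" using mnz unfolding m_def using lin_0[OF A.mul_lin1] by auto
        have x3nz: "ant A x3 \<noteq> 0" using mnz unfolding m_def using lin_0[OF A.mul_lin2] by auto
        have key: "(m \<in> od A) = ((x1 \<in> od A) \<noteq> (x3 \<in> od A))"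
        proof -
          have c1: "x1 \<in> ev A \<or> x1 \<in> od A" using h1 by (simp add: homog_def)
          have c3: "x3 \<in> ev A \<or> x3 \<in> od A" using h3 by (simp add: homog_def)
          have ae: "x3 \<in> ev A \<Longrightarrow> ant A x3 \<in> ev A" by (rule A.ant_ev[OF two])
          have ao: "x3 \<in> od A \<Longrightarrow> ant A x3 \<in> od A" by (rule A.ant_od[OF two])
          have x3nz': "x3 \<noteq> 0" using x3nz lin_0[OF A.ant_lin] by auto
          have ex: "\<And>v. v \<noteq> 0 \<Longrightarrow> v \<in> ev A \<Longrightarrow> v \<notin> od A" using A.ev_od by blast
          show ?thesis using c1 c3 ae ao ex[OF x1nz] ex[OF x3nz'] ex[OF mnz]
            A.mul_ee[of x1 "ant A x3"] A.mul_eo[of x1 "ant A x3"] A.mul_oe[of x1 "ant A x3"] A.mul_oo[of x1 "ant A x3"]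
            unfolding m_def by blast
        qed
        have x1c: "x1 \<in> ev A \<or> x1 \<in> od A" using h1 by (simp add: homog_def)
        have pm: "mul A (QA x1) (ant A x3) = (if x1 \<in> od A then - m else m)"
          using x1c negm by (auto simp: QA A.pinv_od A.pinv_ev m_def)
        have x2o': "x2 \<in> od A" "\<pi> x2 \<in> od B" using x2o by (auto simp: par_def)
        show ?thesis
          unfolding parc pm unfolding par_def using key x2o'
          by (cases "x1 \<in> od A"; cases "x3 \<in> od A") (simp_all add: ksgn_def)
      qed
    qed
  qed
  then show ?thesis unfolding m_def f_def .
qed

lemma pi_cop2r:
  assumes t1: "\<And>b c. Vector_Spaces.linear (sm B) (sm B) (\<lambda>a. F a b c)"
    and t2: "\<And>a c. Vector_Spaces.linear (sm B) (sm B) (\<lambda>b. F a b c)"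
    and t3: "\<And>a b. Vector_Spaces.linear (sm B) (sm B) (F a b)"
  shows "(\<Sum>(x1, x2, x3)\<leftarrow>cop2r A x. F (\<pi> x1) (\<pi> x2) (\<pi> x3)) = (\<Sum>(a, b, c)\<leftarrow>cop2r B (\<pi> x). F a b c)"
proof -
  define G where "G = (\<lambda>a b. \<Sum>(v1, v2)\<leftarrow>cop B b. F a v1 v2)"
  have inner: "(\<Sum>(w1, w2)\<leftarrow>cop A w. F (\<pi> u) (\<pi> w1) (\<pi> w2)) = G (\<pi> u) (\<pi> w)" for u w
  proof -
    have "(\<Sum>(w1, w2)\<leftarrow>cop A w. F (\<pi> u) (\<pi> w1) (\<pi> w2)) = (\<Sum>(v1, v2)\<leftarrow>map (\<lambda>(y, z). (\<pi> y, \<pi> z)) (cop A w). F (\<pi> u) v1 v2)"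
      by (rule sum_map_pair[symmetric])
    also have "\<dots> = G (\<pi> u) (\<pi> w)"
      unfolding G_def by (rule teq2_transfer[OF pcop B.vs t2 t3, symmetric])
    finally show ?thesis .
  qed
  have g1: "Vector_Spaces.linear (sm B) (sm B) (\<lambda>a. G a b)" for b
    unfolding G_def by (rule lin_sum_fun[OF B.vs B.vs t1])
  have g2: "Vector_Spaces.linear (sm B) (sm B) (G a)" for a
    unfolding G_def by (rule B.copsum_lin[OF B.vs t2 t3])
  have "(\<Sum>(x1, x2, x3)\<leftarrow>cop2r A x. F (\<pi> x1) (\<pi> x2) (\<pi> x3)) = (\<Sum>(u, w)\<leftarrow>cop A x. \<Sum>(w1, w2)\<leftarrow>cop A w. F (\<pi> u) (\<pi> w1) (\<pi> w2))"
    by (rule A.sum_cop2r)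
  also have "\<dots> = (\<Sum>(u, w)\<leftarrow>cop A x. G (\<pi> u) (\<pi> w))" by (simp add: inner)
  also have "\<dots> = (\<Sum>(a, b)\<leftarrow>map (\<lambda>(y, z). (\<pi> y, \<pi> z)) (cop A x). G a b)" by (rule sum_map_pair[symmetric])
  also have "\<dots> = (\<Sum>(a, b)\<leftarrow>cop B (\<pi> x). G a b)" by (rule teq2_transfer[OF pcop B.vs g1 g2, symmetric])
  also have "\<dots> = (\<Sum>(a, b, c)\<leftarrow>cop2r B (\<pi> x). F a b c)" unfolding G_def by (rule B.sum_cop2r[symmetric])
  finally show ?thesis .
qed

end


context mainloc begin

lemma main_id: "sm B (\<phi> y) (\<pi> \<chi>) = sm B (\<phi> y) (ant B (QB a))"
proof -
  define x0 where "x0 = (SOME x. \<pi> x = y)"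
  have x0: "\<pi> x0 = y" unfolding x0_def using surj by (metis (mono_tags, lifting) someI_ex surjD)
  define C where "C = (\<lambda>x1 x2 x3. sm A (ksgn (par A x2) (par A x3)) (mul A x1 (ant A x3)))"
  define F where "F = (\<lambda>u v w. sm B (\<phi> v) (mul B (QB u) (ant B w)))"
  have "(\<Sum>(c, b0)\<leftarrow>coactB A \<pi> y. sm A (ksgn (par A c) (par B b0) * \<phi> b0) c) = sm A (\<phi> y) \<chi>"
    using co by (simp add: coacts_by_def)
  moreover have ce: "coactB A \<pi> y = map (\<lambda>(x1, x2, x3). (C x1 x2 x3, \<pi> x2)) (cop2r A x0)"
    unfolding coactB_def adj_expr_def C_def x0_def ..
  moreover have "(\<Sum>(c, b0)\<leftarrow>coactB A \<pi> y. sm A (ksgn (par A c) (par B b0) * \<phi> b0) c)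
     = (\<Sum>(x1, x2, x3)\<leftarrow>cop2r A x0. sm A (ksgn (par A (C x1 x2 x3)) (par B (\<pi> x2)) * \<phi> (\<pi> x2)) (C x1 x2 x3))"
    unfolding ce by (rule sum_map_trip)
  ultimately have "(\<Sum>(x1, x2, x3)\<leftarrow>cop2r A x0. sm A (ksgn (par A (C x1 x2 x3)) (par B (\<pi> x2)) * \<phi> (\<pi> x2)) (C x1 x2 x3)) = sm A (\<phi> y) \<chi>"
    by simp
  moreover have "(\<Sum>(x1, x2, x3)\<leftarrow>cop2r A x0. sm A (ksgn (par A (C x1 x2 x3)) (par B (\<pi> x2)) * \<phi> (\<pi> x2)) (C x1 x2 x3))
     = (\<Sum>(x1, x2, x3)\<leftarrow>cop2r A x0. sm A (\<phi> (\<pi> x2)) (mul A (QA x1) (ant A x3)))"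
  proof (intro arg_cong[where f=sum_list] map_cong refl)
    fix p assume pin: "p \<in> set (cop2r A x0)"
    obtain x1 x2 x3 where p1: "p = (x1, x2, x3)" by (cases p) auto
    with pin have "(x1, x2, x3) \<in> set (cop2r A x0)" by simp
    from A.cop2r_homog[OF this] have "homog A x1" "homog A x2" "homog A x3" by auto
    from co_term[OF this] show "(case p of (x1, x2, x3) \<Rightarrow> sm A (ksgn (par A (C x1 x2 x3)) (par B (\<pi> x2)) * \<phi> (\<pi> x2)) (C x1 x2 x3))
      = (case p of (x1, x2, x3) \<Rightarrow> sm A (\<phi> (\<pi> x2)) (mul A (QA x1) (ant A x3)))"
      unfolding p1 C_def by simp
  qed
  ultimately have E1: "(\<Sum>(x1, x2, x3)\<leftarrow>cop2r A x0. sm A (\<phi> (\<pi> x2)) (mul A (QA x1) (ant A x3))) = sm A (\<phi> y) \<chi>"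
    by simp
  have "\<pi> (\<Sum>(x1, x2, x3)\<leftarrow>cop2r A x0. sm A (\<phi> (\<pi> x2)) (mul A (QA x1) (ant A x3)))
      = (\<Sum>(x1, x2, x3)\<leftarrow>cop2r A x0. \<pi> (sm A (\<phi> (\<pi> x2)) (mul A (QA x1) (ant A x3))))"
    by (rule lin_sum_list3[OF pl])
  also have "\<dots> = (\<Sum>(x1, x2, x3)\<leftarrow>cop2r A x0. F (\<pi> x1) (\<pi> x2) (\<pi> x3))"
    unfolding F_def by (simp add: lin_scale[OF pl] pmul pi_QA pant)
  also have "\<dots> = (\<Sum>(u, v, w)\<leftarrow>cop2r B y. F u v w)"
  proof -
    have t1: "Vector_Spaces.linear (sm B) (sm B) (\<lambda>u. F u v w)" for v w
      unfolding F_def by (rule lin_comp[OF lin_comp[OF QB_lin B.mul_lin1] B.V.linear_scale_self])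
    have t2: "Vector_Spaces.linear (sm B) (sm B) (\<lambda>v. F u v w)" for u w
      unfolding F_def by (rule lin_comp[OF phil B.V.linear_scale_left])
    have t3: "Vector_Spaces.linear (sm B) (sm B) (F u v)" for u v
      unfolding F_def by (rule lin_comp[OF lin_comp[OF B.ant_lin B.mul_lin2] B.V.linear_scale_self])
    show ?thesis using pi_cop2r[OF t1 t2 t3, of x0] x0 by simp
  qed
  also have "\<dots> = (\<Sum>(u, v, w)\<leftarrow>cop2l B y. F u v w)"
  proof -
    have t1: "Vector_Spaces.linear (sm B) (sm B) (\<lambda>u. F u v w)" for v w
      unfolding F_def by (rule lin_comp[OF lin_comp[OF QB_lin B.mul_lin1] B.V.linear_scale_self])
    have t2: "Vector_Spaces.linear (sm B) (sm B) (\<lambda>v. F u v w)" for u w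
      unfolding F_def by (rule lin_comp[OF phil B.V.linear_scale_left])
    have t3: "Vector_Spaces.linear (sm B) (sm B) (F u v)" for u v
      unfolding F_def by (rule lin_comp[OF lin_comp[OF B.ant_lin B.mul_lin2] B.V.linear_scale_self])
    show ?thesis using teq3_transfer[OF B.coassoc B.vs t1 t2 t3] by simp
  qed
  also have "\<dots> = (\<Sum>(u, w)\<leftarrow>cop B y. \<Sum>(u1, u2)\<leftarrow>cop B u. F u1 u2 w)" by (rule B.sum_cop2l)
  also have "\<dots> = (\<Sum>(u, w)\<leftarrow>cop B y. sm B (\<phi> u) (ant B w))"
  proof -
    have "(\<Sum>(u1, u2)\<leftarrow>cop B u. F u1 u2 w) = sm B (\<phi> u) (ant B w)" for u w
    proof -
      have "(\<Sum>(u1, u2)\<leftarrow>cop B u. F u1 u2 w) = (\<Sum>(u1, u2)\<leftarrow>cop B u. mul B (sm B (\<phi> u2) (QB u1)) (ant B w))"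
        unfolding F_def by (simp add: lin_scale[OF B.mul_lin1])
      also have "\<dots> = mul B (\<Sum>(u1, u2)\<leftarrow>cop B u. sm B (\<phi> u2) (QB u1)) (ant B w)"
        by (rule lin_sum_list2[OF B.mul_lin1, symmetric])
      also have "\<dots> = sm B (\<phi> u) (ant B w)" by (simp add: LIid lin_scale[OF B.mul_lin1])
      finally show ?thesis .
    qed
    then show ?thesis by simp
  qed
  also have "\<dots> = ant B (\<Sum>(u, w)\<leftarrow>cop B y. sm B (\<phi> u) w)"
    by (simp add: lin_sum_list2[OF B.ant_lin] lin_scale[OF B.ant_lin])
  also have "\<dots> = sm B (\<phi> y) (ant B (QB a))" by (simp add: DGid lin_scale[OF B.ant_lin])
  finally show ?thesis using E1 by (simp add: lin_scale[OF pl])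
qed

end


context mainloc begin

lemma exists_y0: "\<exists>y0. \<phi> y0 \<noteq> 0 \<and> homp B (\<not> P0) y0"
proof -
  obtain z where z: "\<phi> z \<noteq> 0" using nz by auto
  obtain u v where uv: "u \<in> ev B" "v \<in> od B" "z = u + v" using B.decomp by blast
  have s: "\<phi> z = \<phi> u + \<phi> v" using uv(3) lin_add[OF phil] by simp
  show ?thesis
  proof (cases P0)
    case True
    then have "\<phi> v = 0" using P0D uv by blast
    then show ?thesis using True z s uv by (intro exI[of _ u]) (simp add: homp_def)
  next
    case False
    then have "\<phi> u = 0" using notP0 uv by blast
    then show ?thesis using False z s uv by (intro exI[of _ v]) (simp add: homp_def)
  qed
qed

lemma final: "mul B (\<pi> \<chi>) a = one B \<and> mul B a (\<pi> \<chi>) = one B"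
proof -
  obtain y0 where y0: "\<phi> y0 \<noteq> 0" "homp B (\<not> P0) y0" using exists_y0 by blast
  have "(\<Sum>(u1, u2)\<leftarrow>cop B y0. sm B (\<phi> u1) u2) \<in> ev B"
  proof (rule B.ev_sum)
    fix p assume pin: "p \<in> set (cop B y0)"
    obtain u1 u2 where p1: "p = (u1, u2)" by (cases p)
    with pin have p: "(u1, u2) \<in> set (cop B y0)" by simp
    from B.cop_par[OF y0(2) p] obtain q r where qr: "homp B q u1" "homp B r u2" "(q \<noteq> r) = (\<not> P0)" by blast
    show "(case p of (u1, u2) \<Rightarrow> sm B (\<phi> u1) u2) \<in> ev B"
    proof (cases "\<phi> u1 = 0")
      case True then show ?thesis by (simp add: p1)
    next
      case False
      have "u2 \<in> ev B"
      proof (cases P0)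
        case True
        then have "u1 \<notin> od B" using P0D False by blast
        then have "\<not> q" using qr(1) by (auto simp: homp_def)
        then show ?thesis using qr True by (auto simp: homp_def)
      next
        case nP: False
        then have "u1 \<notin> ev B" using notP0 False by blast
        then have "q" using qr(1) by (cases q) (auto simp: homp_def)
        then show ?thesis using qr nP by (auto simp: homp_def)
      qed
      then show ?thesis by (simp add: p1 B.ev_scale)
    qed
  qed
  then have "sm B (\<phi> y0) (QB a) \<in> ev B" by (simp add: DGid)
  then have "sm B (inverse (\<phi> y0)) (sm B (\<phi> y0) (QB a)) \<in> ev B" by (rule B.ev_scale)
  then have "QB a \<in> ev B" using y0(1) by simp
  then have "QB (QB a) = QB a" by (rule QB_ev)
  then have Qa: "QB a = a" by simp
  have chi: "\<pi> \<chi> = ant B a" using main_id[of y0] y0(1) Qa by simp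
  have ga: "teq2 (sm B) (sm B) (cop B a) [(a, a)]" "cou B a = 1"
    using dg by (auto simp: distinguished_gl_def group_like_def)
  have f1: "Vector_Spaces.linear (sm B) (sm B) (\<lambda>y. mul B (ant B y) z)" for z
    by (rule lin_comp[OF B.ant_lin B.mul_lin1])
  have f2: "Vector_Spaces.linear (sm B) (sm B) (\<lambda>z. mul B y (ant B z))" for y
    by (rule lin_comp[OF B.ant_lin B.mul_lin2])
  have "mul B (ant B a) a = (\<Sum>(y, z)\<leftarrow>cop B a. mul B (ant B y) z)"
    using teq2_transfer[OF ga(1) B.vs f1 B.mul_lin2] by simp
  also have "\<dots> = one B" using ga(2) by (simp add: B.ant_l)
  finally have L: "mul B (ant B a) a = one B" .
  have "mul B a (ant B a) = (\<Sum>(y, z)\<leftarrow>cop B a. mul B y (ant B z))"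
    using teq2_transfer[OF ga(1) B.vs B.mul_lin1 f2] by simp
  also have "\<dots> = one B" using ga(2) by (simp add: B.ant_r)
  finally have R: "mul B a (ant B a) = one B" .
  show ?thesis using L R chi by simp
qed

end

theorem mainTheorem16:
  fixes A :: "('k::field, 'a::ab_group_add) hsalg"
    and B :: "('k, 'b::ab_group_add) hsalg"
    and \<pi> :: "'a \<Rightarrow> 'b"
    and \<phi> :: "'b \<Rightarrow> 'k" and \<chi> :: 'a and a :: 'b
  assumes "(2::'k) \<noteq> 0"
    and "algebraic_supergroup_alg A"
    and "comm_hopf_superalg B" and "fin_dim B"
    and "hopf_superalg_hom A B \<pi>" and "surj \<pi>"
    and "normal_quotient A B \<pi>"
    and "left_integral B \<phi>" and "\<phi> \<noteq> (\<lambda>_. 0)" and "homog_functional B \<phi>"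
    and "group_like A \<chi>" and "coacts_by A \<pi> B \<phi> \<chi>"
    and "distinguished_gl B \<phi> a"
  shows "mul B (\<pi> \<chi>) a = one B \<and> mul B a (\<pi> \<chi>) = one B"
proof -
  have "mainloc A B \<pi> \<phi> \<chi> a"
    unfolding mainloc_def mainloc_axioms_def chs_def
    using assms by (simp add: algebraic_supergroup_alg_def)
  then show ?thesis by (rule mainloc.final)
qed


end
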